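(* Let $M$ be a singular $n\times n$ matrix with all entries in $\{-1,+1\}$. Then there exist a novel partition $\lambda$ of length at most $n$ and a vector $v\in V^{(n)}_\lambda$ with $vM=0$ (i.e. $v$ is a left null vector of $M$).
   Context: An integer partition is $\lambda=(\lambda_1,\dots,\lambda_k)$ with integers $\lambda_1\ge\dots\ge\lambda_k\ge 1$; $k$ is its length. For $v\in\mathbb{Z}^k$ let $v^{\perp B}=\{x\in\{-1,1\}^k: v\cdot x=0\}$ (the Bernoulli orthogonal complement); for a partition $\lambda$, $\lambda^{\perp B}$ means this set for the vector $(\lambda_1,\dots,\lambda_k)$. $V_\lambda\subset\mathbb{Z}^k$ is the set of vectors obtained from $(\lambda_1,\dots,\lambda_k)$ by permuting the coordinates and changing the signs of some coordinates, subject to the first coordinate being positive. For $n\ge k$, $V_\lambda^{(n)}\subset\mathbb{Z}^n$ is the set of vectors with exactly $k$ nonzero coordinates which, read in increasing order of index, form a vector of $V_\lambda$. For $I\subset\{1,\dots,m\}$, $\mathrm{Proj}_I:\{-1,1\}^m\to\{-1,1\}^{|I|}$ keeps the coordinates indexed by $I$ (in increasing order). Reduction: for partitions $\mu$ of length $m$ and $\lambda$ of length $k\le m$, write $\mu\Rightarrow\lambda$ iff there exist $I\subset\{1,\dots,m\}$ with $|I|=k$ and $v\in V_\lambda$ such that $\mathrm{Proj}_I(\mu^{\perp B})\subset v^{\perp B}$ (when $k=m$ this means $\mu^{\perp B}\subset v^{\perp B}$). Strict reduction: $\mu$ strictly reduces to $\lambda$ iff $\mu\Rightarrow\lambda$ and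 not $\lambda\Rightarrow\mu$. Equivalence: partitions $\lambda,\mu$ of the same length are equivalent iff there is $w\in V_\mu$ with $\lambda^{\perp B}=w^{\perp B}$. A partition $\lambda$ is novel iff $\lambda^{\perp B}\neq\emptyset$, there is no partition $\lambda'$ to which $\lambda$ strictly reduces, and $\lambda$ is lexicographically smallest (comparing $(\lambda_1,\lambda_2,\dots)$) among all partitions equivalent to it. *)

theory Defs
  imports "Jordan_Normal_Form.Determinant" "HOL-Library.Multiset"
begin

definition is_partition :: "int list \<Rightarrow> bool" where
  "is_partition lam \<longleftrightarrow> lam \<noteq> [] \<and> sorted_wrt (\<ge>) lam \<and> (\<forall>x\<in>set lam. x \<ge> 1)"

definition dotl :: "int list \<Rightarrow> int list \<Rightarrow> int" where
  "dotl v x = (\<Sum>i<length v. v ! i * x ! i)"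

definition bperp :: "int list \<Rightarrow> int list set" where
  "bperp v = {x. length x = length v \<and> set x \<subseteq> {-1, 1} \<and> dotl v x = 0}"

definition Vset :: "int list \<Rightarrow> int list set" where
  "Vset lam = {w. length w = length lam \<and>
     (\<exists>p. p permutes {..<length lam} \<and> (\<exists>s. (\<forall>i<length lam. s i \<in> {-1, 1}) \<and>
        (\<forall>i<length lam. w ! i = s i * lam ! p i))) \<and>
     w \<noteq> [] \<and> hd w > 0}"

definition Vsetn :: "nat \<Rightarrow> int list \<Rightarrow> int list set" where
  "Vsetn n lam = {v. length v = n \<and> length (filter (\<lambda>x. x \<noteq> 0) v) = length lam \<and>
     filter (\<lambda>x. x \<noteq> 0) v \<in> Vset lam}"

text \<open>Reduction mu \<Rightarrow> lambda. Proj_I is nths.\<close>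
definition reduces :: "int list \<Rightarrow> int list \<Rightarrow> bool" where
  "reduces mu lam \<longleftrightarrow> length lam \<le> length mu \<and>
     (\<exists>I v. I \<subseteq> {..<length mu} \<and> card I = length lam \<and> v \<in> Vset lam \<and>
        (\<lambda>x. nths x I) ` bperp mu \<subseteq> bperp v)"

definition strictly_reduces :: "int list \<Rightarrow> int list \<Rightarrow> bool" where
  "strictly_reduces mu lam \<longleftrightarrow> reduces mu lam \<and> \<not> reduces lam mu"

definition equivalent :: "int list \<Rightarrow> int list \<Rightarrow> bool" where
  "equivalent lam mu \<longleftrightarrow> length lam = length mu \<and> (\<exists>w\<in>Vset mu. bperp lam = bperp w)"

definition lex_le :: "int list \<Rightarrow> int list \<Rightarrow> bool" where
  "lex_le a b \<longleftrightarrow> a = b \<or> (\<exists>i<min (length a) (length b). take i a = take i b \<and> a ! i < b ! i)"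

definition novel :: "int list \<Rightarrow> bool" where
  "novel lam \<longleftrightarrow> is_partition lam \<and> bperp lam \<noteq> {} \<and>
     \<not> (\<exists>lam'. is_partition lam' \<and> strictly_reduces lam lam') \<and>
     (\<forall>mu. is_partition mu \<and> equivalent lam mu \<longrightarrow> lex_le lam mu)"

end

theory Submission
  imports Defs
begin


definition pm1 :: "nat \<Rightarrow> int list set" where
  "pm1 k = {x. length x = k \<and> set x \<subseteq> {-1, 1}}"

lemma bperp_alt: "bperp v = {x \<in> pm1 (length v). dotl v x = 0}"
  unfolding bperp_def pm1_def by auto

definition Tr :: "(nat \<Rightarrow> nat) \<Rightarrow> (nat \<Rightarrow> int) \<Rightarrow> int list \<Rightarrow> int list" where
  "Tr p s x = map (\<lambda>i. s i * x ! (p i)) [0..<length x]"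

definition sgnok :: "nat \<Rightarrow> (nat \<Rightarrow> int) \<Rightarrow> bool" where
  "sgnok k s \<longleftrightarrow> (\<forall>i<k. s i \<in> {-1, 1})"

lemma length_Tr[simp]: "length (Tr p s x) = length x" by (simp add: Tr_def)
lemma nth_Tr[simp]: "i < length x \<Longrightarrow> Tr p s x ! i = s i * x ! (p i)" by (simp add: Tr_def)

lemma sq_pm1: "s \<in> {-1, 1::int} \<Longrightarrow> s * s = 1" by auto

lemma Tr_dot:
  assumes p: "p permutes {..<k}" and s: "sgnok k s" and a: "length a = k" and x: "length x = k"
  shows "dotl (Tr p s a) (Tr p s x) = dotl a x"
proof -
  have "dotl (Tr p s a) (Tr p s x) = (\<Sum>i<k. s i * a ! (p i) * (s i * x ! (p i)))"
    unfolding dotl_def using a x by (intro sum.cong) auto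
  also have "\<dots> = (\<Sum>i<k. a ! (p i) * x ! (p i))"
  proof (intro sum.cong refl)
    fix i assume "i \<in> {..<k}"
    then have "s i * s i = 1" using s unfolding sgnok_def by (intro sq_pm1) auto
    then show "s i * a ! (p i) * (s i * x ! (p i)) = a ! (p i) * x ! (p i)"
      by (metis (no_types, lifting) mult.assoc mult.left_commute mult_1)
  qed
  also have "\<dots> = (\<Sum>i<k. a ! i * x ! i)"
    using sum.permute[OF p, of "\<lambda>i. a ! i * x ! i"] by (simp add: comp_def)
  finally show ?thesis unfolding dotl_def using a by simp
qed

lemma Tr_pm1:
  assumes p: "p permutes {..<k}" and s: "sgnok k s" and x: "x \<in> pm1 k"
  shows "Tr p s x \<in> pm1 k"
proof -
  have "\<And>i. i < k \<Longrightarrow> s i * x ! (p i) \<in> {-1, 1}"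
  proof -
    fix i assume "i < k"
    then have "p i < k" using permutes_in_image[OF p] by auto
    then have "x ! p i \<in> {-1,1}" using x unfolding pm1_def by (auto dest!: nth_mem)
    moreover have "s i \<in> {-1,1}" using s \<open>i<k\<close> unfolding sgnok_def by auto
    ultimately show "s i * x ! (p i) \<in> {-1, 1}" by auto
  qed
  then have "set (Tr p s x) \<subseteq> {-1, 1}" using x unfolding pm1_def
  proof (intro subsetI)
    fix y assume h: "\<And>i. i < k \<Longrightarrow> s i * x ! (p i) \<in> {-1, 1}" and y: "y \<in> set (Tr p s x)"
    then obtain i where "i < length x" "y = Tr p s x ! i" by (auto simp: in_set_conv_nth)
    then show "y \<in> {-1, 1}" using h x unfolding pm1_def by auto
  qed
  then show ?thesis using x unfolding pm1_def by simp
qed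

definition Tinv :: "(nat \<Rightarrow> nat) \<Rightarrow> (nat \<Rightarrow> int) \<Rightarrow> int list \<Rightarrow> int list" where
  "Tinv p s = Tr (inv_into UNIV p) (s \<circ> inv_into UNIV p)"

lemma sgnok_inv:
  assumes p: "p permutes {..<k}" and s: "sgnok k s" shows "sgnok k (s \<circ> inv_into UNIV p)"
  using s permutes_in_image[OF permutes_inv[OF p]] unfolding sgnok_def by auto

lemma Tr_Tinv:
  assumes p: "p permutes {..<k}" and s: "sgnok k s" and x: "length x = k"
  shows "Tr p s (Tinv p s x) = x" "Tinv p s (Tr p s x) = x"
proof -
  show "Tr p s (Tinv p s x) = x"
  proof (rule nth_equalityI)
    fix i assume i: "i < length (Tr p s (Tinv p s x))"
    then have ik: "i < k" using x by (simp add: Tinv_def)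
    have pi: "p i < k" using permutes_in_image[OF p] ik by auto
    have "inv_into UNIV p (p i) = i" using permutes_inverses(2)[OF p] by auto
    moreover have "s i * s i = 1" using s ik unfolding sgnok_def by (intro sq_pm1) auto
    ultimately show "Tr p s (Tinv p s x) ! i = x ! i" using ik pi x
      by (simp add: Tinv_def mult.assoc[symmetric])
  qed (simp add: Tinv_def)
  show "Tinv p s (Tr p s x) = x"
  proof (rule nth_equalityI)
    fix i assume i: "i < length (Tinv p s (Tr p s x))"
    then have ik: "i < k" using x by (simp add: Tinv_def)
    have pi: "inv_into UNIV p i < k" using permutes_in_image[OF permutes_inv[OF p]] ik by auto
    have "p (inv_into UNIV p i) = i" using permutes_inverses(1)[OF p] by auto
    moreover have "s (inv_into UNIV p i) * s (inv_into UNIV p i) = 1" using s pi unfolding sgnok_def by (intro sq_pm1) auto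
    ultimately show "Tinv p s (Tr p s x) ! i = x ! i" using ik pi x
      by (simp add: Tinv_def mult.assoc[symmetric])
  qed (simp add: Tinv_def)
qed

lemma Tinv_Tr_form: "Tinv p s x = Tr (inv_into UNIV p) (s \<circ> inv_into UNIV p) x" by (simp add: Tinv_def)

lemma bperp_Tr:
  assumes p: "p permutes {..<k}" and s: "sgnok k s" and a: "length a = k"
  shows "bperp (Tr p s a) = Tr p s ` bperp a"
proof
  show "Tr p s ` bperp a \<subseteq> bperp (Tr p s a)"
  proof
    fix y assume "y \<in> Tr p s ` bperp a"
    then obtain x where x: "x \<in> bperp a" "y = Tr p s x" by auto
    have xl: "x \<in> pm1 k" using x a unfolding bperp_alt by auto
    then have "length x = k" unfolding pm1_def by auto
    then show "y \<in> bperp (Tr p s a)" using x Tr_pm1[OF p s xl] Tr_dot[OF p s a] a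
      unfolding bperp_alt by auto
  qed
next
  show "bperp (Tr p s a) \<subseteq> Tr p s ` bperp a"
  proof
    fix y assume y: "y \<in> bperp (Tr p s a)"
    then have yl: "y \<in> pm1 k" using a unfolding bperp_alt by auto
    then have ylen: "length y = k" unfolding pm1_def by auto
    have ip: "inv_into UNIV p permutes {..<k}" using permutes_inv[OF p] .
    have is': "sgnok k (s \<circ> inv_into UNIV p)" using sgnok_inv[OF p s] .
    let ?x = "Tinv p s y"
    have xl: "?x \<in> pm1 k" unfolding Tinv_def using Tr_pm1[OF ip is' yl] .
    then have xlen: "length ?x = k" unfolding pm1_def by auto
    have "dotl a ?x = dotl (Tr p s a) (Tr p s ?x)" using Tr_dot[OF p s a xlen] by simp
    also have "\<dots> = dotl (Tr p s a) y" using Tr_Tinv(1)[OF p s ylen] by simp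
    finally have "?x \<in> bperp a" using y xl a unfolding bperp_alt by auto
    then show "y \<in> Tr p s ` bperp a" using Tr_Tinv(1)[OF p s ylen] by (metis image_eqI)
  qed
qed

lemma card_bperp_Tr:
  assumes p: "p permutes {..<k}" and s: "sgnok k s" and a: "length a = k"
  shows "card (bperp (Tr p s a)) = card (bperp a)"
proof -
  have "inj_on (Tr p s) (bperp a)"
  proof (rule inj_on_inverseI)
    fix x assume "x \<in> bperp a"
    then have "length x = k" using a unfolding bperp_def by auto
    then show "Tinv p s (Tr p s x) = x" using Tr_Tinv(2)[OF p s] by auto
  qed
  then show ?thesis using bperp_Tr[OF assms] by (simp add: card_image)
qed

lemma Vset_Tr:
  assumes "w \<in> Vset lam"
  obtains p s where "p permutes {..<length lam}" "sgnok (length lam) s" "w = Tr p s lam"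
proof -
  from assms obtain p s where p: "p permutes {..<length lam}" and s: "\<forall>i<length lam. s i \<in> {-1, 1}"
    and w: "\<forall>i<length lam. w ! i = s i * lam ! p i" and l: "length w = length lam"
    unfolding Vset_def by blast
  have "w = Tr p s lam" by (rule nth_equalityI) (use w l in auto)
  then show ?thesis using that p s unfolding sgnok_def by blast
qed

lemma dotl_uminus: "dotl (map uminus a) x = - dotl a x"
  unfolding dotl_def by (simp add: sum_negf)

lemma bperp_uminus: "bperp (map uminus a) = bperp a"
  unfolding bperp_def using dotl_uminus by auto

lemma signed_in_Vset:
  assumes p: "p permutes {..<length lam}" and s: "sgnok (length lam) s" and ne: "lam \<noteq> []"
    and nz: "\<forall>x\<in>set lam. x \<noteq> 0"
  shows "\<exists>u\<in>Vset lam. bperp u = bperp (Tr p s lam)"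
proof -
  have l0: "0 < length lam" using ne by auto
  have tne: "\<And>t. Tr p t lam \<noteq> []" using l0 by (metis length_Tr length_greater_0_conv)
  have p0: "p 0 < length lam" using permutes_in_image[OF p] l0 by auto
  have h: "hd (Tr p s lam) = s 0 * lam ! p 0"
  proof -
    have "Tr p s lam \<noteq> []" using l0 by (metis length_Tr length_greater_0_conv)
    then have "hd (Tr p s lam) = Tr p s lam ! 0" by (rule hd_conv_nth)
    then show ?thesis using l0 by simp
  qed
  have s0: "s 0 \<in> {-1,1}" using s l0 unfolding sgnok_def by auto
  have lnz: "lam ! p 0 \<noteq> 0" using nz p0 by auto
  show ?thesis
  proof (cases "hd (Tr p s lam) > 0")
    case True
    have "Tr p s lam \<in> Vset lam" unfolding Vset_def using True p s l0 tne
      by (auto simp: sgnok_def intro!: exI[of _ p] exI[of _ s])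
    then show ?thesis by blast
  next
    case False
    have hnz: "hd (Tr p s lam) \<noteq> 0" using h s0 lnz by auto
    let ?s = "\<lambda>i. - s i"
    have eq: "Tr p ?s lam = map uminus (Tr p s lam)" by (rule nth_equalityI) auto
    have "hd (Tr p ?s lam) > 0" using False hnz tne[of s] by (simp add: eq hd_map)
    then have "Tr p ?s lam \<in> Vset lam" unfolding Vset_def using p s l0 tne
      by (auto simp: sgnok_def intro!: exI[of _ p] exI[of _ ?s])
    then show ?thesis using bperp_uminus eq by metis
  qed
qed


lemma nths_upt: "nths [0..<k] I = filter (\<lambda>i. i \<in> I) [0..<k]"
  by (induct k) (auto simp: nths_append)

lemma nths_as_map: "nths x I = map ((!) x) (filter (\<lambda>i. i \<in> I) [0..<length x])"
proof -
  have "x = map ((!) x) [0..<length x]" by (simp add: map_nth)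
  then have "nths x I = nths (map ((!) x) [0..<length x]) I" by simp
  also have "\<dots> = map ((!) x) (nths [0..<length x] I)" by (rule nths_map)
  finally show ?thesis by (simp add: nths_upt)
qed

lemma Vset_mset:
  assumes w: "w \<in> Vset lam" and pos: "\<forall>x\<in>set lam. x \<ge> 1"
  shows "mset (map abs w) = mset lam"
proof -
  obtain p s where p: "p permutes {..<length lam}" and s: "sgnok (length lam) s" and wt: "w = Tr p s lam"
    using Vset_Tr[OF w] by blast
  have "map abs w = permute_list p lam"
  proof (rule nth_equalityI)
    fix i assume "i < length (map abs w)"
    then have i: "i < length lam" using wt by simp
    then have pi: "p i < length lam" using permutes_in_image[OF p] by auto
    then have "lam ! p i \<ge> 1" using pos by auto
    moreover have "s i \<in> {-1,1}" using s i unfolding sgnok_def by auto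
    ultimately show "map abs w ! i = permute_list p lam ! i"
      using i wt permute_list_nth[OF p i] by (auto simp: abs_mult)
  qed (simp add: wt)
  then show ?thesis using p by simp
qed

lemma Vset_of_mset:
  assumes m: "mset (map abs w) = mset lam" and pos: "\<forall>x\<in>set lam. x \<ge> 1"
    and ne: "w \<noteq> []" and h: "hd w > 0"
  shows "w \<in> Vset lam"
proof -
  obtain p where p: "p permutes {..<length lam}" and pl: "permute_list p lam = map abs w"
    using mset_eq_permutation[OF m] by blast
  have len: "length w = length lam" using mset_eq_length[OF m] by simp
  have "\<forall>i<length lam. sgn (w ! i) \<in> {-1, 1} \<and> w ! i = sgn (w ! i) * lam ! p i"
  proof (intro allI impI)
    fix i assume i: "i < length lam"
    then have pi: "p i < length lam" using permutes_in_image[OF p] by auto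
    have "lam ! p i = \<bar>w ! i\<bar>" using permute_list_nth[OF p i] pl i len
      by (metis nth_map)
    moreover have "lam ! p i \<ge> 1" using pos pi by auto
    ultimately show "sgn (w ! i) \<in> {-1, 1} \<and> w ! i = sgn (w ! i) * lam ! p i"
      by (auto simp: sgn_if abs_if)
  qed
  then show ?thesis unfolding Vset_def using len ne h p
    by (auto intro!: exI[of _ p] exI[of _ "\<lambda>i. sgn (w ! i)"])
qed

definition emb :: "nat \<Rightarrow> nat \<Rightarrow> (nat \<Rightarrow> nat) \<Rightarrow> (nat \<Rightarrow> int) \<Rightarrow> int list" where
  "emb n m g y = map (\<lambda>j. if j \<in> g ` {..<m} then y (inv_into {..<m} g j) else 0) [0..<n]"

lemma emb_sum:
  assumes inj: "inj_on g {..<m}" and sub: "g ` {..<m} \<subseteq> {..<n}"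
  shows "(\<Sum>j<n. emb n m g y ! j * c j) = (\<Sum>t<m. y t * c (g t))"
proof -
  have "(\<Sum>j<n. emb n m g y ! j * c j) = (\<Sum>j\<in>g ` {..<m}. emb n m g y ! j * c j)"
    by (rule sum.mono_neutral_right) (use sub in \<open>auto simp: emb_def\<close>)
  also have "\<dots> = (\<Sum>t<m. emb n m g y ! (g t) * c (g t))"
    by (rule sum.reindex[OF inj, unfolded comp_def])
  also have "\<dots> = (\<Sum>t<m. y t * c (g t))"
  proof (rule sum.cong[OF refl])
    fix t assume t: "t \<in> {..<m}"
    then have "g t < n" using sub by auto
    moreover have "inv_into {..<m} g (g t) = t" using inv_into_f_f[OF inj t] .
    ultimately show "emb n m g y ! (g t) * c (g t) = y t * c (g t)" using t
      by (simp add: emb_def)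
  qed
  finally show ?thesis .
qed

lemma emb_mset:
  assumes inj: "inj_on g {..<m}" and sub: "g ` {..<m} \<subseteq> {..<n}" and nz: "\<forall>t<m. y t \<noteq> 0"
  shows "mset (filter (\<lambda>x. x \<noteq> 0) (map abs (emb n m g y))) = mset (map (\<lambda>t. \<bar>y t\<bar>) [0..<m])"
proof -
  let ?h = "\<lambda>j. \<bar>emb n m g y ! j\<bar>"
  have mv: "map abs (emb n m g y) = map ?h [0..<n]"
    by (rule nth_equalityI) (auto simp: emb_def)
  have hg: "\<And>t. t < m \<Longrightarrow> ?h (g t) = \<bar>y t\<bar>"
  proof -
    fix t assume t: "t < m"
    then have "g t < n" using sub by auto
    moreover have "inv_into {..<m} g (g t) = t" using inv_into_f_f[OF inj] t by auto
    ultimately show "?h (g t) = \<bar>y t\<bar>" using t by (simp add: emb_def)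
  qed
  have set: "{j \<in> {..<n}. ?h j \<noteq> 0} = g ` {..<m}"
  proof
    show "{j \<in> {..<n}. ?h j \<noteq> 0} \<subseteq> g ` {..<m}" by (auto simp: emb_def split: if_splits)
    show "g ` {..<m} \<subseteq> {j \<in> {..<n}. ?h j \<noteq> 0}"
    proof
      fix j assume "j \<in> g ` {..<m}"
      then obtain t where t: "t < m" "j = g t" by auto
      then have "?h j = \<bar>y t\<bar>" using hg by simp
      then show "j \<in> {j \<in> {..<n}. ?h j \<noteq> 0}" using t nz sub by auto
    qed
  qed
  have "mset (filter (\<lambda>x. x \<noteq> 0) (map abs (emb n m g y))) = image_mset ?h (filter_mset (\<lambda>j. ?h j \<noteq> 0) (mset_set {..<n}))"
    unfolding mv by (simp add: filter_map comp_def atLeast0LessThan)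
  also have "\<dots> = image_mset ?h (mset_set (g ` {..<m}))" using set by simp
  also have "\<dots> = image_mset ?h (image_mset g (mset_set {..<m}))" using image_mset_mset_set[OF inj] by simp
  also have "\<dots> = image_mset (\<lambda>t. \<bar>y t\<bar>) (mset_set {..<m})"
    by (simp add: multiset.map_comp comp_def) (rule image_mset_cong, simp add: hg)
  also have "\<dots> = mset (map (\<lambda>t. \<bar>y t\<bar>) [0..<m])" by (simp add: atLeast0LessThan)
  finally show ?thesis .
qed


definition nullv :: "int mat \<Rightarrow> nat \<Rightarrow> int list \<Rightarrow> bool" where
  "nullv M n v \<longleftrightarrow> length v = n \<and> (\<forall>j<n. (\<Sum>i<n. v ! i * M $$ (i, j)) = 0)"

lemma nullv_iff:
  assumes M: "M \<in> carrier_mat n n" and l: "length v = n"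
  shows "transpose_mat M *\<^sub>v vec_of_list v = 0\<^sub>v n \<longleftrightarrow> nullv M n v"
proof -
  have "(transpose_mat M *\<^sub>v vec_of_list v) $ j = (\<Sum>i<n. v ! i * M $$ (i, j))" if j: "j < n" for j
  proof -
    have "(transpose_mat M *\<^sub>v vec_of_list v) $ j = row (transpose_mat M) j \<bullet> vec_of_list v"
      using M j by simp
    also have "\<dots> = (\<Sum>i<n. M $$ (i, j) * v ! i)"
      using M j l by (simp add: scalar_prod_def atLeast0LessThan vec_of_list_index)
    finally show ?thesis by (simp add: mult.commute)
  qed
  then show ?thesis using M l unfolding nullv_def
    by (auto simp: vec_eq_iff)
qed

definition rz :: "int mat \<Rightarrow> nat \<Rightarrow> int list \<Rightarrow> bool" where
  "rz M n lam \<longleftrightarrow> (\<exists>v. nullv M n v \<and> mset (filter (\<lambda>x. x \<noteq> 0) (map abs v)) = mset lam)"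

lemma rz_embed:
  fixes v lam :: "int list"
  assumes l: "length v = n" and m: "mset (filter (\<lambda>x. x \<noteq> 0) (map abs v)) = mset lam"
  obtains e where "inj_on e {..<length lam}" "e ` {..<length lam} \<subseteq> {..<n}"
    "\<forall>b<length lam. v ! (e b) \<noteq> 0 \<and> lam ! b = \<bar>v ! (e b)\<bar>"
    "\<forall>i<n. v ! i \<noteq> 0 \<longrightarrow> i \<in> e ` {..<length lam}"
proof -
  let ?Ls = "filter (\<lambda>i. v ! i \<noteq> 0) [0..<n]"
  let ?f = "\<lambda>i. \<bar>v ! i\<bar>"
  have "map abs v = map ?f [0..<n]" using l by (rule_tac nth_equalityI) auto
  moreover have "((\<lambda>x. x \<noteq> 0) \<circ> ?f) = (\<lambda>i. v ! i \<noteq> 0)" by (auto simp: fun_eq_iff)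
  ultimately have fe: "filter (\<lambda>x. x \<noteq> 0) (map abs v) = map ?f ?Ls" by (simp only: filter_map)
  have m2: "mset lam = mset (map ?f ?Ls)" using m fe by simp
  obtain p where p: "p permutes {..<length (map ?f ?Ls)}" and pl: "permute_list p (map ?f ?Ls) = lam"
    using mset_eq_permutation[OF m2] by blast
  have kl: "length lam = length ?Ls" using pl by (metis length_map length_permute_list)
  let ?k = "length lam"
  have p': "p permutes {..<?k}" using p kl by simp
  define e where "e b = ?Ls ! (p b)" for b
  have pb: "\<And>b. b < ?k \<Longrightarrow> p b < ?k" using permutes_in_image[OF p'] by auto
  have dist: "distinct ?Ls" by simp
  have inj: "inj_on e {..<?k}"
  proof (rule inj_onI)
    fix a b assume a: "a \<in> {..<?k}" and b: "b \<in> {..<?k}" and eq: "e a = e b"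
    then have "p a = p b" using pb dist kl unfolding e_def by (simp add: nth_eq_iff_index_eq)
    then show "a = b" using permutes_inj[OF p'] by (simp add: inj_eq)
  qed
  have inset: "\<And>b. b < ?k \<Longrightarrow> e b \<in> set ?Ls"
  proof -
    fix b assume "b < ?k"
    then have "p b < length ?Ls" using pb kl by simp
    then show "e b \<in> set ?Ls" unfolding e_def by (rule nth_mem)
  qed
  have sub: "e ` {..<?k} \<subseteq> {..<n}" using inset by auto
  have prp: "\<forall>b<?k. v ! (e b) \<noteq> 0 \<and> lam ! b = \<bar>v ! (e b)\<bar>"
  proof (intro allI impI conjI)
    fix b assume b: "b < ?k"
    show "v ! (e b) \<noteq> 0" using inset[OF b] by auto
    have "lam ! b = permute_list p (map ?f ?Ls) ! b" using pl by simp
    also have "\<dots> = map ?f ?Ls ! (p b)" using permute_list_nth[OF p] b kl by simp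
    also have "\<dots> = \<bar>v ! (e b)\<bar>" using pb[OF b] kl unfolding e_def by simp
    finally show "lam ! b = \<bar>v ! (e b)\<bar>" .
  qed
  have cov: "\<forall>i<n. v ! i \<noteq> 0 \<longrightarrow> i \<in> e ` {..<?k}"
  proof (intro allI impI)
    fix i assume "i < n" "v ! i \<noteq> 0"
    then have "i \<in> set ?Ls" by simp
    then obtain j where j: "j < length ?Ls" "?Ls ! j = i" by (metis in_set_conv_nth)
    have "j \<in> p ` {..<?k}" using permutes_image[OF p'] j kl by auto
    then obtain b where "b < ?k" "p b = j" by auto
    then show "i \<in> e ` {..<?k}" using j unfolding e_def by auto
  qed
  show ?thesis using that[OF inj sub prp cov] .
qed

lemma rz_bperp:
  fixes v lam :: "int list"
  assumes l: "length v = n"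
    and inj: "inj_on e {..<length lam}" and sub: "e ` {..<length lam} \<subseteq> {..<n}"
    and pr: "\<forall>b<length lam. v ! (e b) \<noteq> 0 \<and> lam ! b = \<bar>v ! (e b)\<bar>"
    and cov: "\<forall>i<n. v ! i \<noteq> 0 \<longrightarrow> i \<in> e ` {..<length lam}"
    and c: "\<forall>i<n. c i \<in> {-1, 1}" and z: "(\<Sum>i<n. v ! i * c i) = 0"
  shows "map (\<lambda>b. sgn (v ! (e b)) * c (e b)) [0..<length lam] \<in> bperp lam"
proof -
  let ?k = "length lam"
  let ?x = "map (\<lambda>b. sgn (v ! (e b)) * c (e b)) [0..<?k]"
  have "set ?x \<subseteq> {-1, 1}"
  proof
    fix y assume "y \<in> set ?x"
    then obtain b where b: "b < ?k" "y = sgn (v ! (e b)) * c (e b)" by auto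
    have "e b < n" using sub b by auto
    then have "c (e b) \<in> {-1,1}" using c by auto
    moreover have "sgn (v ! (e b)) \<in> {-1,1}" using pr b by (auto simp: sgn_if)
    ultimately show "y \<in> {-1, 1}" using b by auto
  qed
  moreover have "dotl lam ?x = 0"
  proof -
    have "dotl lam ?x = (\<Sum>b<?k. v ! (e b) * c (e b))"
      unfolding dotl_def
    proof (rule sum.cong[OF refl])
      fix b assume "b \<in> {..<?k}"
      then have b: "b < ?k" by simp
      then have "lam ! b * sgn (v ! (e b)) = v ! (e b)" using pr
        by (metis abs_mult_sgn mult.commute)
      then show "lam ! b * ?x ! b = v ! (e b) * c (e b)" using b by (simp add: mult.assoc[symmetric])
    qed
    also have "\<dots> = (\<Sum>i\<in>e ` {..<?k}. v ! i * c i)"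
      by (rule sum.reindex[OF inj, unfolded comp_def, symmetric])
    also have "\<dots> = (\<Sum>i<n. v ! i * c i)"
      by (rule sum.mono_neutral_left) (use sub cov in auto)
    finally show ?thesis using z by simp
  qed
  ultimately show ?thesis unfolding bperp_def by simp
qed


lemma transfer:
  fixes M :: "int mat"
  assumes Mpm: "\<forall>i<n. \<forall>j<n. M $$ (i, j) \<in> {-1, 1}"
    and r: "rz M n lam" and pos': "\<forall>x\<in>set lam'. x \<ge> 1"
    and red: "reduces lam lam'"
  shows "rz M n lam'"
proof -
  obtain v where nv: "nullv M n v" and mv: "mset (filter (\<lambda>x. x \<noteq> 0) (map abs v)) = mset lam"
    using r unfolding rz_def by blast
  have lv: "length v = n" using nv unfolding nullv_def by simp
  let ?k = "length lam"
  obtain e where inj: "inj_on e {..<?k}" and sub: "e ` {..<?k} \<subseteq> {..<n}"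
    and pr: "\<forall>b<?k. v ! (e b) \<noteq> 0 \<and> lam ! b = \<bar>v ! (e b)\<bar>"
    and cov: "\<forall>i<n. v ! i \<noteq> 0 \<longrightarrow> i \<in> e ` {..<?k}"
    using rz_embed[OF lv mv] by blast
  obtain I w where I: "I \<subseteq> {..<?k}" and cI: "card I = length lam'" and w: "w \<in> Vset lam'"
    and img: "(\<lambda>x. nths x I) ` bperp lam \<subseteq> bperp w"
    using red unfolding reduces_def by blast
  let ?k' = "length lam'"
  have lw: "length w = ?k'" using w unfolding Vset_def by simp
  define L where "L = filter (\<lambda>i. i \<in> I) [0..<?k]"
  have dL: "distinct L" unfolding L_def by simp
  have sL: "set L = I" unfolding L_def using I by auto
  have lL: "length L = ?k'" using distinct_card[OF dL] sL cI by simp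
  have Lk: "\<And>t. t < ?k' \<Longrightarrow> L ! t < ?k" using sL I lL by (metis lessThan_iff nth_mem subsetD)
  define g where "g t = e (L ! t)" for t
  have ginj: "inj_on g {..<?k'}"
  proof (rule inj_onI)
    fix a b assume a: "a \<in> {..<?k'}" and b: "b \<in> {..<?k'}" and eq: "g a = g b"
    then have "L ! a = L ! b" using inj Lk unfolding g_def inj_on_def by auto
    then show "a = b" using dL a b lL by (simp add: nth_eq_iff_index_eq)
  qed
  have gsub: "g ` {..<?k'} \<subseteq> {..<n}" using sub Lk unfolding g_def by auto
  define y where "y t = w ! t * sgn (v ! (g t))" for t
  let ?v' = "emb n ?k' g y"
  have wm: "mset (map abs w) = mset lam'" using Vset_mset[OF w pos'] .
  have wnz: "\<And>t. t < ?k' \<Longrightarrow> w ! t \<noteq> 0"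
  proof -
    fix t assume t: "t < ?k'"
    then have "\<bar>w ! t\<bar> \<in> set (map abs w)" using lw by auto
    then have "\<bar>w ! t\<bar> \<in> set lam'" using wm by (metis set_mset_mset)
    then show "w ! t \<noteq> 0" using pos' by fastforce
  qed
  have vgnz: "\<And>t. t < ?k' \<Longrightarrow> v ! (g t) \<noteq> 0" using pr Lk unfolding g_def by auto
  have ynz: "\<forall>t<?k'. y t \<noteq> 0" using wnz vgnz unfolding y_def by (auto simp: sgn_0_0)
  have null': "nullv M n ?v'"
    unfolding nullv_def
  proof (intro conjI allI impI)
    show "length ?v' = n" by (simp add: emb_def)
    fix j assume j: "j < n"
    let ?c = "\<lambda>i. M $$ (i, j)"
    have "(\<Sum>i<n. ?v' ! i * M $$ (i, j)) = (\<Sum>t<?k'. y t * ?c (g t))"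
      using emb_sum[OF ginj gsub, of y ?c] by simp
    also have "\<dots> = 0"
    proof -
      let ?x = "map (\<lambda>b. sgn (v ! (e b)) * ?c (e b)) [0..<?k]"
      have cpm: "\<forall>i<n. ?c i \<in> {-1, 1}" using Mpm j by auto
      have z: "(\<Sum>i<n. v ! i * ?c i) = 0" using nv j unfolding nullv_def by auto
      have "?x \<in> bperp lam" using rz_bperp[OF lv inj sub pr cov cpm z] .
      then have "nths ?x I \<in> bperp w" using img by auto
      moreover have "nths ?x I = map ((!) ?x) L" unfolding nths_as_map L_def by simp
      ultimately have "dotl w (map ((!) ?x) L) = 0" unfolding bperp_def by simp
      moreover have "dotl w (map ((!) ?x) L) = (\<Sum>t<?k'. y t * ?c (g t))"
        unfolding dotl_def lw
      proof (rule sum.cong[OF refl])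
        fix t assume "t \<in> {..<?k'}"
        then have t: "t < ?k'" by simp
        then show "w ! t * map ((!) ?x) L ! t = y t * ?c (g t)"
          using Lk[OF t] lL unfolding y_def g_def by (simp add: mult.assoc)
      qed
      ultimately show ?thesis by simp
    qed
    finally show "(\<Sum>i<n. ?v' ! i * M $$ (i, j)) = 0" .
  qed
  have "mset (filter (\<lambda>x. x \<noteq> 0) (map abs ?v')) = mset (map (\<lambda>t. \<bar>y t\<bar>) [0..<?k'])"
    using emb_mset[OF ginj gsub ynz] .
  also have "map (\<lambda>t. \<bar>y t\<bar>) [0..<?k'] = map abs w"
  proof (rule nth_equalityI)
    fix t assume "t < length (map (\<lambda>t. \<bar>y t\<bar>) [0..<?k'])"
    then have t: "t < ?k'" by simp
    then show "map (\<lambda>t. \<bar>y t\<bar>) [0..<?k'] ! t = map abs w ! t"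
      using vgnz[OF t] lw unfolding y_def by (simp add: abs_mult abs_sgn_eq)
  qed (simp add: lw)
  finally show ?thesis unfolding rz_def using null' wm by auto
qed

lemma rz_bperp_ne:
  fixes M :: "int mat"
  assumes Mpm: "\<forall>i<n. \<forall>j<n. M $$ (i, j) \<in> {-1, 1}" and r: "rz M n lam" and n: "0 < n"
  shows "bperp lam \<noteq> {}"
proof -
  obtain v where nv: "nullv M n v" and mv: "mset (filter (\<lambda>x. x \<noteq> 0) (map abs v)) = mset lam"
    using r unfolding rz_def by blast
  have lv: "length v = n" using nv unfolding nullv_def by simp
  obtain e where inj: "inj_on e {..<length lam}" and sub: "e ` {..<length lam} \<subseteq> {..<n}"
    and pr: "\<forall>b<length lam. v ! (e b) \<noteq> 0 \<and> lam ! b = \<bar>v ! (e b)\<bar>"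
    and cov: "\<forall>i<n. v ! i \<noteq> 0 \<longrightarrow> i \<in> e ` {..<length lam}"
    using rz_embed[OF lv mv] by blast
  have cpm: "\<forall>i<n. M $$ (i, 0) \<in> {-1, 1}" using Mpm n by auto
  have z: "(\<Sum>i<n. v ! i * M $$ (i, 0)) = 0" using nv n unfolding nullv_def by auto
  show ?thesis using rz_bperp[OF lv inj sub pr cov cpm z] by auto
qed

lemma lex_le_refl: "lex_le a a" unfolding lex_le_def by simp

lemma lex_le_Cons: "lex_le t tb \<Longrightarrow> lex_le (h # t) (h # tb)"
  unfolding lex_le_def
proof (elim disjE exE conjE)
  fix i assume "i < min (length t) (length tb)" "take i t = take i tb" "t ! i < tb ! i"
  then show "h # t = h # tb \<or> (\<exists>i<min (length (h # t)) (length (h # tb)).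
      take i (h # t) = take i (h # tb) \<and> (h # t) ! i < (h # tb) ! i)"
    by (intro disjI2 exI[of _ "Suc i"]) auto
qed simp

lemma lex_le_hd: "h < hb \<Longrightarrow> lex_le (h # t) (hb # tb)"
  unfolding lex_le_def by (intro disjI2 exI[of _ 0]) auto

lemma lexmin:
  "A \<noteq> {} \<Longrightarrow> \<forall>a\<in>A. length a = k \<and> (\<forall>x\<in>set a. x \<ge> (1::int)) \<Longrightarrow> \<exists>a\<in>A. \<forall>b\<in>A. lex_le a b"
proof (induction k arbitrary: A)
  case 0
  then obtain a where "a \<in> A" by auto
  show ?case
  proof (intro bexI[OF _ \<open>a \<in> A\<close>] ballI)
    fix b assume "b \<in> A"
    then have "a = b" using 0(2) \<open>a \<in> A\<close> by (metis length_0_conv)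
    then show "lex_le a b" by (simp add: lex_le_refl)
  qed
next
  case (Suc k)
  have ex: "\<exists>m::nat. \<exists>a\<in>A. hd a = int m"
  proof -
    obtain a where a: "a \<in> A" using Suc.prems by auto
    then have "a \<noteq> []" using Suc.prems by auto
    then have "hd a \<ge> 1" using Suc.prems a by auto
    then have "hd a = int (nat (hd a))" by simp
    then show ?thesis using a by blast
  qed
  define m where "m = (LEAST m::nat. \<exists>a\<in>A. hd a = int m)"
  have mex: "\<exists>a\<in>A. hd a = int m" unfolding m_def by (rule LeastI_ex[OF ex])
  have mle: "\<And>b. b \<in> A \<Longrightarrow> int m \<le> hd b"
  proof -
    fix b assume b: "b \<in> A"
    then have "b \<noteq> []" using Suc.prems by auto
    then have hb: "hd b \<ge> 1" using Suc.prems b by auto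
    then have "hd b = int (nat (hd b))" by simp
    then have "m \<le> nat (hd b)" unfolding m_def using b by (intro Least_le) blast
    then show "int m \<le> hd b" using hb by linarith
  qed
  define A' where "A' = tl ` {a \<in> A. hd a = int m}"
  have A'ne: "A' \<noteq> {}" using mex unfolding A'_def by auto
  have A'p: "\<forall>a\<in>A'. length a = k \<and> (\<forall>x\<in>set a. x \<ge> 1)"
  proof
    fix a assume "a \<in> A'"
    then obtain b where b: "b \<in> A" "a = tl b" unfolding A'_def by auto
    then have "b \<noteq> []" using Suc.prems by auto
    then have "set a \<subseteq> set b" using b by (cases b) auto
    then show "length a = k \<and> (\<forall>x\<in>set a. x \<ge> 1)" using Suc.prems b by auto
  qed
  obtain t where t: "t \<in> A'" and tmin: "\<forall>b\<in>A'. lex_le t b" using Suc.IH[OF A'ne A'p] by blast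
  obtain a1 where a1: "a1 \<in> A" "hd a1 = int m" "t = tl a1" using t unfolding A'_def by auto
  have "a1 \<noteq> []" using Suc.prems a1 by auto
  then have a1e: "a1 = int m # t" using a1 by (cases a1) auto
  show ?case
  proof (intro bexI[OF _ a1(1)] ballI)
    fix b assume b: "b \<in> A"
    then have "b \<noteq> []" using Suc.prems by auto
    then obtain hb tb where be: "b = hb # tb" by (cases b) auto
    have "int m \<le> hb" using mle[OF b] be by simp
    then show "lex_le a1 b"
    proof (cases "int m < hb")
      case True then show ?thesis using a1e be lex_le_hd by simp
    next
      case False
      then have "hb = int m" using \<open>int m \<le> hb\<close> by simp
      then have "tb \<in> A'" unfolding A'_def using b be by force
      then have "lex_le t tb" using tmin by blast
      then show ?thesis using a1e be \<open>hb = int m\<close> lex_le_Cons by simp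
    qed
  qed
qed


lemma filter_abs: "filter (\<lambda>x. x \<noteq> 0) (map abs (v::int list)) = map abs (filter (\<lambda>x. x \<noteq> 0) v)"
  by (induct v) auto

lemma filter_neg: "filter (\<lambda>x. x \<noteq> 0) (map uminus (v::int list)) = map uminus (filter (\<lambda>x. x \<noteq> 0) v)"
  by (induct v) auto

lemma final_vsetn:
  fixes M :: "int mat"
  assumes nv: "nullv M n v" and mv: "mset (filter (\<lambda>x. x \<noteq> 0) (map abs v)) = mset lam"
    and lp: "is_partition lam"
  shows "\<exists>v'. v' \<in> Vsetn n lam \<and> nullv M n v'"
proof -
  let ?u = "filter (\<lambda>x. x \<noteq> 0) v"
  have pos: "\<forall>x\<in>set lam. x \<ge> 1" and lne: "lam \<noteq> []" using lp unfolding is_partition_def by auto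
  have mu: "mset (map abs ?u) = mset lam" using mv filter_abs by metis
  have lu: "length ?u = length lam" using mset_eq_length[OF mu] by simp
  have une: "?u \<noteq> []" using lu lne by auto
  have hnz: "hd ?u \<noteq> 0" using une hd_in_set[OF une] by (metis (mono_tags) mem_Collect_eq set_filter)
  have lv: "length v = n" using nv unfolding nullv_def by simp
  show ?thesis
  proof (cases "hd ?u > 0")
    case True
    have "?u \<in> Vset lam" using Vset_of_mset[OF mu pos une True] .
    then have "v \<in> Vsetn n lam" unfolding Vsetn_def using lv lu by simp
    then show ?thesis using nv by blast
  next
    case False
    let ?w = "map uminus v"
    have fu: "filter (\<lambda>x. x \<noteq> 0) ?w = map uminus ?u" by (rule filter_neg)
    have m2: "mset (map abs (map uminus ?u)) = mset lam" using mu by (simp add: comp_def)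
    have "hd (map uminus ?u) > 0" using False hnz une by (simp add: hd_map)
    then have "map uminus ?u \<in> Vset lam" using Vset_of_mset[OF m2 pos] une by simp
    then have "?w \<in> Vsetn n lam" unfolding Vsetn_def mem_Collect_eq fu using lv lu by simp
    moreover have "nullv M n ?w" using nv unfolding nullv_def
      by (auto simp: sum_negf)
    ultimately show ?thesis by blast
  qed
qed

lemma init_null:
  fixes M :: "int mat"
  assumes M: "M \<in> carrier_mat n n" and d: "det M = 0"
  shows "\<exists>v. nullv M n v \<and> (\<exists>i<n. v ! i \<noteq> 0)"
proof -
  have Mt: "transpose_mat M \<in> carrier_mat n n" using M by simp
  have "det (transpose_mat M) = 0" using d det_transpose[OF M] by simp
  then obtain u where u: "u \<in> carrier_vec n" "u \<noteq> 0\<^sub>v n" "transpose_mat M *\<^sub>v u = 0\<^sub>v n"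
    using det_0_iff_vec_prod_zero[OF Mt] by blast
  let ?v = "list_of_vec u"
  have lv: "length ?v = n" using u by simp
  have "vec_of_list ?v = u" by (rule vec_list)
  then have "nullv M n ?v" using nullv_iff[OF M lv] u by simp
  moreover obtain i where "i < n" "u $ i \<noteq> 0" using u by (metis eq_vecI carrier_vecD index_zero_vec)
  then have "?v ! i \<noteq> 0" using u by simp
  ultimately show ?thesis using \<open>i < n\<close> by blast
qed

lemma card_bperp_le: "finite (bperp x) \<and> card (bperp x) \<le> 2 ^ length x"
proof -
  have sub: "bperp x \<subseteq> {xs. set xs \<subseteq> {-1, 1::int} \<and> length xs = length x}" unfolding bperp_def by auto
  have f: "finite {xs. set xs \<subseteq> {-1, 1::int} \<and> length xs = length x}" by (rule finite_lists_length_eq) simp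
  have c: "card {xs. set xs \<subseteq> {-1, 1::int} \<and> length xs = length x} = 2 ^ length x"
    by (simp add: card_lists_length_eq numeral_2_eq_2)
  show ?thesis using card_mono[OF f sub] finite_subset[OF sub f] c by simp
qed

lemma nths_full: "length x = k \<Longrightarrow> nths x {..<k} = x" by simp

lemma card_I_full: "I \<subseteq> {..<k} \<Longrightarrow> card I = k \<Longrightarrow> I = {..<k}"
  using card_subset_eq[of "{..<k}" I] by simp


theorem mainTheorem2:
  fixes M :: "int mat" and n :: nat
  assumes "M \<in> carrier_mat n n"
    and "\<forall>i<n. \<forall>j<n. M $$ (i, j) \<in> {-1, 1}"
    and "det M = 0"
  shows "\<exists>lam v. novel lam \<and> length lam \<le> n \<and> v \<in> Vsetn n lam \<and>
           transpose_mat M *\<^sub>v vec_of_list v = 0\<^sub>v n"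
proof -
  note M = assms(1) and Mpm = assms(2)
  obtain v0 i0 where nv0: "nullv M n v0" and i0: "i0 < n" "v0 ! i0 \<noteq> 0"
    using init_null[OF assms(1,3)] by blast
  have n0: "0 < n" using i0 by simp
  have lv0: "length v0 = n" using nv0 unfolding nullv_def by simp
  define R where "R = {lam. is_partition lam \<and> length lam \<le> n \<and> bperp lam \<noteq> {} \<and> rz M n lam}"
  have inR: "lam \<in> R" if "is_partition lam" "length lam \<le> n" "rz M n lam" for lam
    using that rz_bperp_ne[OF Mpm _ n0] unfolding R_def by blast
  define xs where "xs = filter (\<lambda>x. x \<noteq> 0) (map abs v0)"
  define lam0 where "lam0 = rev (sort xs)"
  have m0: "mset lam0 = mset xs" unfolding lam0_def by simp
  have sx: "set lam0 = set xs" using m0 by (metis set_mset_mset)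
  have "\<bar>v0 ! i0\<bar> \<in> set xs" using i0 lv0 unfolding xs_def by auto
  then have "lam0 \<noteq> []" using sx by auto
  moreover have "sorted_wrt (\<ge>) lam0" unfolding lam0_def by (simp add: sorted_wrt_rev)
  moreover have "\<forall>x\<in>set lam0. x \<ge> 1" using sx unfolding xs_def by auto
  ultimately have p0: "is_partition lam0" unfolding is_partition_def by blast
  have "length lam0 \<le> n" using m0 lv0 unfolding xs_def
    by (metis length_filter_le length_map mset_eq_length)
  moreover have "rz M n lam0" unfolding rz_def using nv0 m0 unfolding xs_def by auto
  ultimately have l0R: "lam0 \<in> R" using inR p0 by blast
  define l0 where "l0 = (LEAST l. \<exists>lam\<in>R. length lam = l)"
  have l0ex: "\<exists>lam\<in>R. length lam = l0" unfolding l0_def by (rule LeastI_ex) (use l0R in blast)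
  have l0le: "\<And>lam. lam \<in> R \<Longrightarrow> l0 \<le> length lam" unfolding l0_def by (rule Least_le) blast
  define dd where "dd lam = 2 ^ n - card (bperp lam)" for lam
  define d0 where "d0 = (LEAST d. \<exists>lam\<in>R. length lam = l0 \<and> dd lam = d)"
  have d0ex: "\<exists>lam\<in>R. length lam = l0 \<and> dd lam = d0" unfolding d0_def by (rule LeastI_ex) (use l0ex in blast)
  have d0le: "\<And>lam. lam \<in> R \<Longrightarrow> length lam = l0 \<Longrightarrow> d0 \<le> dd lam" unfolding d0_def by (rule Least_le) blast
  define R2 where "R2 = {lam \<in> R. length lam = l0 \<and> dd lam = d0}"
  have R2ne: "R2 \<noteq> {}" using d0ex unfolding R2_def by blast
  have R2p: "\<forall>a\<in>R2. length a = l0 \<and> (\<forall>x\<in>set a. x \<ge> 1)"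
    unfolding R2_def R_def is_partition_def by blast
  obtain lam where lR2: "lam \<in> R2" and lmin: "\<forall>b\<in>R2. lex_le lam b"
    using lexmin[OF R2ne R2p] by blast
  have lR: "lam \<in> R" and ll: "length lam = l0" and ld: "dd lam = d0" using lR2 unfolding R2_def by auto
  have lp: "is_partition lam" and lln: "length lam \<le> n" and lbp: "bperp lam \<noteq> {}" and lrz: "rz M n lam"
    using lR unfolding R_def by auto
  have lpos: "\<forall>x\<in>set lam. x \<ge> 1" and lne: "lam \<noteq> []" using lp unfolding is_partition_def by auto
  let ?k = "length lam"
  have cardle: "\<And>x. length x \<le> n \<Longrightarrow> card (bperp x) \<le> 2 ^ n"
  proof -
    fix x :: "int list" assume "length x \<le> n"
    then have "(2::nat) ^ length x \<le> 2 ^ n" by (rule power_increasing) simp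
    then show "card (bperp x) \<le> 2 ^ n" using card_bperp_le[of x] by linarith
  qed
  have nostrict: "\<not> (\<exists>lam'. is_partition lam' \<and> strictly_reduces lam lam')"
  proof
    assume "\<exists>lam'. is_partition lam' \<and> strictly_reduces lam lam'"
    then obtain lam' where lp': "is_partition lam'" and red: "reduces lam lam'" and nred: "\<not> reduces lam' lam"
      unfolding strictly_reduces_def by blast
    have pos': "\<forall>x\<in>set lam'. x \<ge> 1" using lp' unfolding is_partition_def by auto
    have rz': "rz M n lam'" using transfer[OF Mpm lrz pos' red] .
    have len': "length lam' \<le> ?k" using red unfolding reduces_def by simp
    have "lam' \<in> R" using inR[OF lp' _ rz'] len' lln by simp
    then have "l0 \<le> length lam'" using l0le by blast
    then have lk: "length lam' = ?k" using len' ll by simp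
    have "d0 \<le> dd lam'" using d0le[OF \<open>lam' \<in> R\<close>] lk ll by simp
    then have c1: "card (bperp lam') \<le> card (bperp lam)"
      using ld cardle[of lam] cardle[of lam'] lln lk unfolding dd_def by simp
    obtain I w where I: "I \<subseteq> {..<?k}" and cI: "card I = length lam'" and w: "w \<in> Vset lam'"
      and img: "(\<lambda>x. nths x I) ` bperp lam \<subseteq> bperp w"
      using red unfolding reduces_def by blast
    have Ik: "I = {..<?k}" using card_I_full[OF I] cI lk by simp
    have sub: "bperp lam \<subseteq> bperp w"
    proof
      fix x assume x: "x \<in> bperp lam"
      then have "length x = ?k" unfolding bperp_def by simp
      then have "nths x I = x" using Ik by simp
      then show "x \<in> bperp w" using img x by (metis image_eqI subsetD)
    qed
    obtain p s where p: "p permutes {..<length lam'}" and s: "sgnok (length lam') s" and wt: "w = Tr p s lam'"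
      using Vset_Tr[OF w] by blast
    have p': "p permutes {..<?k}" and s': "sgnok ?k s" using p s lk by auto
    have cw: "card (bperp w) = card (bperp lam')" using card_bperp_Tr[OF p' s'] lk wt by simp
    have fw: "finite (bperp w)" using card_bperp_le by blast
    have eqb: "bperp lam = bperp w"
      using card_subset_eq[OF fw sub] cw c1 card_mono[OF fw sub] by simp
    have ip: "inv_into UNIV p permutes {..<?k}" using permutes_inv[OF p'] .
    have is': "sgnok ?k (s \<circ> inv_into UNIV p)" using sgnok_inv[OF p' s'] .
    have lnz: "\<forall>x\<in>set lam. x \<noteq> 0" using lpos by fastforce
    obtain u where u: "u \<in> Vset lam" and bu: "bperp u = bperp (Tr (inv_into UNIV p) (s \<circ> inv_into UNIV p) lam)"
      using signed_in_Vset[OF ip is' lne lnz] by blast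
    have "reduces lam' lam"
      unfolding reduces_def
    proof (intro conjI exI)
      show "length lam \<le> length lam'" using lk by simp
      show "{..<length lam'} \<subseteq> {..<length lam'}" by simp
      show "card {..<length lam'} = length lam" using lk by simp
      show "u \<in> Vset lam" using u .
      show "(\<lambda>x. nths x {..<length lam'}) ` bperp lam' \<subseteq> bperp u"
      proof
        fix z assume "z \<in> (\<lambda>x. nths x {..<length lam'}) ` bperp lam'"
        then obtain x where x: "x \<in> bperp lam'" "z = nths x {..<length lam'}" by auto
        have xl: "length x = ?k" using x lk unfolding bperp_def by simp
        then have zx: "z = x" using x lk by simp
        have "Tr p s x \<in> bperp w" using bperp_Tr[OF p' s'] lk wt x by auto
        then have "Tr p s x \<in> bperp lam" using eqb by simp
        then have "Tinv p s (Tr p s x) \<in> Tinv p s ` bperp lam" by blast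
        then have "x \<in> Tinv p s ` bperp lam" using Tr_Tinv(2)[OF p' s' xl] by simp
        then show "z \<in> bperp u" using zx bu bperp_Tr[OF ip is'] unfolding Tinv_def by simp
      qed
    qed
    then show False using nred by simp
  qed
  have lexm: "\<forall>mu. is_partition mu \<and> equivalent lam mu \<longrightarrow> lex_le lam mu"
  proof (intro allI impI)
    fix mu assume h: "is_partition mu \<and> equivalent lam mu"
    then have mp: "is_partition mu" and lm: "length lam = length mu" unfolding equivalent_def by auto
    obtain w where w: "w \<in> Vset mu" and bw: "bperp lam = bperp w"
      using h unfolding equivalent_def by blast
    have mpos: "\<forall>x\<in>set mu. x \<ge> 1" using mp unfolding is_partition_def by auto
    have red: "reduces lam mu"
      unfolding reduces_def
    proof (intro conjI exI)
      show "length mu \<le> length lam" using lm by simp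
      show "{..<?k} \<subseteq> {..<?k}" by simp
      show "card {..<?k} = length mu" using lm by simp
      show "w \<in> Vset mu" using w .
      show "(\<lambda>x. nths x {..<?k}) ` bperp lam \<subseteq> bperp w"
      proof
        fix z assume "z \<in> (\<lambda>x. nths x {..<?k}) ` bperp lam"
        then obtain x where x: "x \<in> bperp lam" "z = nths x {..<?k}" by auto
        then have "length x = ?k" unfolding bperp_def by simp
        then show "z \<in> bperp w" using x bw by simp
      qed
    qed
    have rzm: "rz M n mu" using transfer[OF Mpm lrz mpos red] .
    have muR: "mu \<in> R" using inR[OF mp _ rzm] lm lln by simp
    obtain p s where p: "p permutes {..<length mu}" and s: "sgnok (length mu) s" and wt: "w = Tr p s mu"
      using Vset_Tr[OF w] by blast
    have "card (bperp w) = card (bperp mu)" using card_bperp_Tr[OF p s] wt by simp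
    then have "dd mu = d0" using ld bw unfolding dd_def by simp
    then have "mu \<in> R2" using muR lm ll unfolding R2_def by simp
    then show "lex_le lam mu" using lmin by blast
  qed
  have nov: "novel lam" unfolding novel_def using lp lbp nostrict lexm by blast
  obtain v mv where "nullv M n v" "mset (filter (\<lambda>x. x \<noteq> 0) (map abs v)) = mset lam"
    using lrz unfolding rz_def by blast
  then obtain v' where v': "v' \<in> Vsetn n lam" "nullv M n v'" using final_vsetn[OF _ _ lp] by blast
  have "length v' = n" using v' unfolding nullv_def by simp
  then have "transpose_mat M *\<^sub>v vec_of_list v' = 0\<^sub>v n" using nullv_iff[OF M] v' by simp
  then show ?thesis using nov lln v' by blast
qed

end
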